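(* Let $\Omega\subset\mathbb{R}^n$ be a bounded domain with smooth boundary and outward normal $\nu$, let $a,b,c,m,d_1,d_2>0$, and let $k:\Omega\to\mathbb{R}$ satisfy $k\in C^1(\Omega)$, $k\ge0$, and $k$ does not vanish identically on any subset (or finite union of subsets) of $\Omega$ of positive measure. Let $\widehat{k}=\min_{x\in\Omega}k(x)$ and $\widetilde{k}=\max_{x\in\Omega}k(x)$. Let $(u,v)$ solve $$u_t=d_1\Delta u+bu(1-u-cv),\qquad v_t=d_2\Delta v+v\Big(\frac{1}{1+k(x)u}-v-au-muv\Big)\quad\text{in }\Omega,$$ let $(\widehat u,\widehat v)$ solve the same system with $k(x)$ replaced by the constant $\widehat{k}$, and let $(\widetilde u,\widetilde v)$ solve the same system with $k(x)$ replaced by the constant $\widetilde{k}$, all with homogeneous Neumann boundary conditions $\partial_\nu(\cdot)=0$ on $\partial\Omega$ and the same spatially homogeneous positive initial data $u(x,0)\equiv u_0>0$, $v(x,0)\equiv v_0>0$. Then the pointwise comparison $\widetilde v\le v\le\widehat v$ holds.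
   Context: Solutions are classical, global and nonnegative. The constant-fear systems are $\widehat u_t=d_1\Delta\widehat u+b\widehat u(1-\widehat u-c\widehat v)$, $\widehat v_t=d_2\Delta\widehat v+\widehat v(\frac{1}{1+\widehat k\widehat u}-\widehat v-a\widehat u-m\widehat u\widehat v)$ and $\widetilde u_t=d_1\Delta\widetilde u+b\widetilde u(1-\widetilde u-c\widetilde v)$, $\widetilde v_t=d_2\Delta\widetilde v+\widetilde v(\frac{1}{1+\widetilde k\widetilde u}-\widetilde v-a\widetilde u-m\widetilde u\widetilde v)$. *)

theory Defs
  imports "HOL-Analysis.Analysis"
begin

definition pdir :: "'n::finite \<Rightarrow> (real^'n \<Rightarrow> real) \<Rightarrow> real^'n \<Rightarrow> real" where
  "pdir i f x = deriv (\<lambda>s. f (x + s *\<^sub>R axis i 1)) 0"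

definition pdir_exists :: "'n::finite \<Rightarrow> (real^'n \<Rightarrow> real) \<Rightarrow> real^'n \<Rightarrow> bool" where
  "pdir_exists i f x \<longleftrightarrow> (\<lambda>s. f (x + s *\<^sub>R axis i 1)) differentiable (at 0)"

text \<open>Iterated partial derivatives; the list gives the directions (innermost last).\<close>
fun iter_pd :: "'n::finite list \<Rightarrow> (real^'n \<Rightarrow> real) \<Rightarrow> real^'n \<Rightarrow> real" where
  "iter_pd [] f = f"
| "iter_pd (i # is) f = pdir i (iter_pd is f)"

definition smooth_fn :: "(real^'n::finite \<Rightarrow> real) \<Rightarrow> bool" where
  "smooth_fn f \<longleftrightarrow> (\<forall>is. continuous_on UNIV (iter_pd is f) \<and> (\<forall>i x. pdir_exists i (iter_pd is f) x))"

definition grad :: "(real^'n::finite \<Rightarrow> real) \<Rightarrow> real^'n \<Rightarrow> real^'n" where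
  "grad f x = (\<chi> i. pdir i f x)"

definition lap :: "(real^'n::finite \<Rightarrow> real) \<Rightarrow> real^'n \<Rightarrow> real" where
  "lap f x = (\<Sum>i\<in>UNIV. pdir i (pdir i f) x)"

definition smooth_bdd_domain :: "(real^'n::finite) set \<Rightarrow> (real^'n \<Rightarrow> real) \<Rightarrow> bool" where
  "smooth_bdd_domain \<Omega> \<phi> \<longleftrightarrow> open \<Omega> \<and> connected \<Omega> \<and> bounded \<Omega> \<and> \<Omega> \<noteq> {} \<and>
     smooth_fn \<phi> \<and> \<Omega> = {x. \<phi> x < 0} \<and> frontier \<Omega> = {x. \<phi> x = 0} \<and>
     (\<forall>x\<in>frontier \<Omega>. grad \<phi> x \<noteq> 0)"

definition outward_normal :: "(real^'n::finite \<Rightarrow> real) \<Rightarrow> real^'n \<Rightarrow> real^'n" where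
  "outward_normal \<phi> x = grad \<phi> x /\<^sub>R norm (grad \<phi> x)"

definition tder :: "(real^'n::finite \<Rightarrow> real \<Rightarrow> real) \<Rightarrow> real^'n \<Rightarrow> real \<Rightarrow> real" where
  "tder w x t = deriv (\<lambda>s. w x s) t"

text \<open>Classical regularity (C^{2,1} in Omega x (0,inf), continuous on closure(Omega) x [0,inf))
  together with homogeneous Neumann boundary condition.\<close>
definition classical_neumann ::
  "(real^'n::finite) set \<Rightarrow> (real^'n \<Rightarrow> real^'n) \<Rightarrow> (real^'n \<Rightarrow> real \<Rightarrow> real) \<Rightarrow> bool" where
  "classical_neumann \<Omega> \<nu> w \<longleftrightarrow>
     continuous_on (closure \<Omega> \<times> {0..}) (\<lambda>p. w (fst p) (snd p)) \<and>
     (\<forall>x\<in>\<Omega>. \<forall>t>0. (\<lambda>s. w x s) differentiable (at t)) \<and>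
     continuous_on (\<Omega> \<times> {0<..}) (\<lambda>p. tder w (fst p) (snd p)) \<and>
     (\<forall>x\<in>\<Omega>. \<forall>t>0. \<forall>i. pdir_exists i (\<lambda>y. w y t) x) \<and>
     (\<forall>x\<in>\<Omega>. \<forall>t>0. \<forall>i j. pdir_exists j (pdir i (\<lambda>y. w y t)) x) \<and>
     (\<forall>i. continuous_on (\<Omega> \<times> {0<..}) (\<lambda>p. pdir i (\<lambda>y. w y (snd p)) (fst p))) \<and>
     (\<forall>i j. continuous_on (\<Omega> \<times> {0<..}) (\<lambda>p. pdir j (pdir i (\<lambda>y. w y (snd p))) (fst p))) \<and>
     (\<forall>t>0. \<forall>x\<in>frontier \<Omega>. \<exists>D. ((\<lambda>y. w y t) has_derivative D) (at x within closure \<Omega>) \<and> D (\<nu> x) = 0)"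

definition fear_solution ::
  "(real^'n::finite) set \<Rightarrow> (real^'n \<Rightarrow> real^'n) \<Rightarrow> real \<Rightarrow> real \<Rightarrow> real \<Rightarrow> real \<Rightarrow> real \<Rightarrow> real \<Rightarrow>
   (real^'n \<Rightarrow> real) \<Rightarrow> real \<Rightarrow> real \<Rightarrow> (real^'n \<Rightarrow> real \<Rightarrow> real) \<Rightarrow> (real^'n \<Rightarrow> real \<Rightarrow> real) \<Rightarrow> bool" where
  "fear_solution \<Omega> \<nu> a b c m d1 d2 K u0 v0 u v \<longleftrightarrow>
     classical_neumann \<Omega> \<nu> u \<and> classical_neumann \<Omega> \<nu> v \<and>
     (\<forall>x\<in>closure \<Omega>. \<forall>t\<ge>0. u x t \<ge> 0 \<and> v x t \<ge> 0) \<and>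
     (\<forall>x\<in>closure \<Omega>. u x 0 = u0 \<and> v x 0 = v0) \<and>
     (\<forall>x\<in>\<Omega>. \<forall>t>0.
        tder u x t = d1 * lap (\<lambda>y. u y t) x + b * u x t * (1 - u x t - c * v x t) \<and>
        tder v x t = d2 * lap (\<lambda>y. v y t) x
           + v x t * (1 / (1 + K x * u x t) - v x t - a * u x t - m * u x t * v x t))"

end

theory Submission
  imports Defs
begin


lemma pdir_deriv0:
  assumes "pdir_exists i f y"
  shows "((\<lambda>s. f (y + s *\<^sub>R axis i 1)) has_real_derivative pdir i f y) (at 0)"
  using assms unfolding pdir_exists_def pdir_def
  by (simp add: DERIV_deriv_iff_real_differentiable)

lemma shift_deriv:
  fixes F :: "real^'n::finite \<Rightarrow> real"
  assumes "((\<lambda>r. F ((x + s *\<^sub>R e) + r *\<^sub>R e)) has_real_derivative D) (at 0)"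
  shows "((\<lambda>r. F (x + r *\<^sub>R e)) has_real_derivative D) (at s)"
proof -
  have "(\<lambda>r. F ((x + s *\<^sub>R e) + r *\<^sub>R e)) = (\<lambda>r. (\<lambda>r. F (x + r *\<^sub>R e)) (r + s))"
    by (auto simp: algebra_simps scaleR_add_left)
  with assms show ?thesis using DERIV_shift[of "\<lambda>r. F (x + r *\<^sub>R e)" D 0 s] by simp
qed

lemma second_test_1d:
  fixes G G' :: "real \<Rightarrow> real"
  assumes d: "d > 0" and mn: "\<And>s. \<bar>s\<bar> < d \<Longrightarrow> G 0 \<le> G s"
    and der: "\<And>s. \<bar>s\<bar> < d \<Longrightarrow> (G has_real_derivative G' s) (at s)"
    and der2: "(G' has_real_derivative D) (at 0)"
  shows "D \<ge> 0"
proof (rule ccontr)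
  assume "\<not> D \<ge> 0" hence Dn: "D < 0" by simp
  have g0: "G' 0 = 0"
    using DERIV_local_min[OF der[of 0] d] mn d by (simp add: abs_minus_commute)
  obtain e where e: "e > 0" "\<And>h. h > 0 \<Longrightarrow> h < e \<Longrightarrow> G' 0 > G' (0 + h)"
    using DERIV_neg_dec_right[OF der2 Dn] by blast
  define s where "s = min e d / 2"
  have s: "s > 0" "s < e" "s < d" using e d by (auto simp: s_def)
  obtain z where z: "0 < z" "z < s" "G s - G 0 = (s - 0) * G' z"
    using MVT2[of 0 s G G'] s der by force
  have "G' z < 0" using e(2)[of z] z s g0 by simp
  hence "G s - G 0 < 0" using z s by (simp add: mult_pos_neg)
  moreover have "G 0 \<le> G s" using mn s by simp
  ultimately show False by simp
qed

lemma interior_min_second: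
  fixes F F' :: "real^'n::finite \<Rightarrow> real"
  assumes U: "open U" "x \<in> U" and mn: "\<And>y. y \<in> U \<Longrightarrow> F x \<le> F y"
    and d1: "\<And>y. y \<in> U \<Longrightarrow> ((\<lambda>s. F (y + s *\<^sub>R e)) has_real_derivative F' y) (at 0)"
    and d2: "((\<lambda>s. F' (x + s *\<^sub>R e)) has_real_derivative D) (at 0)"
  shows "D \<ge> 0"
proof (cases "e = 0")
  case True
  then have "(\<lambda>s. F' (x + s *\<^sub>R e)) = (\<lambda>s. F' x)" by simp
  with d2 have "D = 0" using DERIV_const DERIV_unique by metis
  thus ?thesis by simp
next
  case False
  obtain r where r: "r > 0" "ball x r \<subseteq> U" using U openE by blast
  define d where "d = r / norm e"
  have d: "d > 0" using r False by (simp add: d_def)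
  have inU: "x + s *\<^sub>R e \<in> U" if "\<bar>s\<bar> < d" for s
  proof -
    have "norm (s *\<^sub>R e) < r" using that False by (simp add: d_def pos_less_divide_eq)
    hence "x + s *\<^sub>R e \<in> ball x r" by (simp add: dist_norm)
    thus ?thesis using r by blast
  qed
  show ?thesis
  proof (rule second_test_1d[where G="\<lambda>s. F (x + s *\<^sub>R e)" and G'="\<lambda>s. F' (x + s *\<^sub>R e)", OF d])
    fix s :: real assume "\<bar>s\<bar> < d"
    then show "F (x + 0 *\<^sub>R e) \<le> F (x + s *\<^sub>R e)" using mn inU by simp
    show "((\<lambda>s. F (x + s *\<^sub>R e)) has_real_derivative F' (x + s *\<^sub>R e)) (at s)"
      by (rule shift_deriv) (rule d1[OF inU[OF \<open>\<bar>s\<bar> < d\<close>]])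
  next
    show "((\<lambda>s. F' (x + s *\<^sub>R e)) has_real_derivative D) (at 0)" by (rule d2)
  qed
qed

lemma mvt_abs:
  fixes g g' :: "real \<Rightarrow> real"
  assumes der: "\<And>s. (g has_real_derivative g' s) (at s)"
  shows "\<exists>\<xi>. \<bar>\<xi>\<bar> \<le> \<bar>h\<bar> \<and> g h - g 0 = h * g' \<xi>"
proof -
  consider "h > 0" | "h < 0" | "h = 0" by linarith
  then show ?thesis
  proof cases
    case 1
    obtain z where "0 < z" "z < h" "g h - g 0 = (h - 0) * g' z" using MVT2[of 0 h g g'] 1 der by blast
    then show ?thesis by (intro exI[of _ z]) auto
  next
    case 2
    obtain z where "h < z" "z < 0" "g 0 - g h = (0 - h) * g' z" using MVT2[of h 0 g g'] 2 der by blast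
    then show ?thesis by (intro exI[of _ z]) (auto simp: algebra_simps)
  next
    case 3 then show ?thesis by (intro exI[of _ 0]) auto
  qed
qed

lemma sum_axis_component:
  fixes w :: "real^'n::finite"
  assumes "finite S"
  shows "(\<Sum>i\<in>S. w$i *\<^sub>R axis i 1) $ k = (if k \<in> S then w$k else 0)"
proof -
  have "(\<Sum>i\<in>S. w$i *\<^sub>R axis i 1) $ k = (\<Sum>i\<in>S. w$i * (if k = i then 1 else 0))"
    by (simp add: axis_def)
  also have "\<dots> = (\<Sum>i\<in>S. if i = k then w$k else 0)"
    by (rule sum.cong) auto
  also have "\<dots> = (if k \<in> S then w$k else 0)" using assms by (simp add: sum.delta')
  finally show ?thesis .
qed

lemma sum_axis_UNIV:
  fixes w :: "real^'n::finite"
  shows "(\<Sum>i\<in>UNIV. w$i *\<^sub>R axis i 1) = w"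
  by (simp add: vec_eq_iff sum_axis_component del: sum_component)

lemma first_order:
  fixes f :: "real^'n::finite \<Rightarrow> real"
  assumes ex: "\<And>i y. pdir_exists i f y" and cont: "\<And>i. continuous_on UNIV (pdir i f)" and e: "e > 0"
  shows "\<exists>\<delta>>0. \<forall>w. norm w < \<delta> \<longrightarrow>
     \<bar>f (x + w) - f x - (\<Sum>i\<in>UNIV. w$i * pdir i f x)\<bar> \<le> e * (\<Sum>i\<in>UNIV. \<bar>w$i\<bar>)"
proof -
  have "\<forall>i. \<exists>d>0. \<forall>y. dist y x < d \<longrightarrow> dist (pdir i f y) (pdir i f x) < e"
  proof
    fix i
    have "isCont (pdir i f) x" using cont[of i] by (simp add: continuous_on_eq_continuous_at)
    then show "\<exists>d>0. \<forall>y. dist y x < d \<longrightarrow> dist (pdir i f y) (pdir i f x) < e"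
      using e unfolding continuous_at_eps_delta by blast
  qed
  then obtain D where D: "\<And>i. D i > 0" "\<And>i y. dist y x < D i \<Longrightarrow> dist (pdir i f y) (pdir i f x) < e"
    by metis
  define \<delta> where "\<delta> = Min (range D)"
  have \<delta>: "\<delta> > 0" using D(1) by (simp add: \<delta>_def)
  have \<delta>le: "\<delta> \<le> D i" for i by (simp add: \<delta>_def)
  have key: "\<forall>w. norm w < \<delta> \<longrightarrow> \<bar>f (x + (\<Sum>i\<in>S. w$i *\<^sub>R axis i 1)) - f x - (\<Sum>i\<in>S. w$i * pdir i f x)\<bar>
      \<le> e * (\<Sum>i\<in>S. \<bar>w$i\<bar>)" if "finite S" for S
    using that
  proof (induction S rule: finite_induct)
    case empty then show ?case by simp
  next
    case (insert j S)
    show ?case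
    proof (intro allI impI)
      fix w :: "real^'n" assume w: "norm w < \<delta>"
      define y where "y = x + (\<Sum>i\<in>S. w$i *\<^sub>R axis i 1)"
      have IH: "\<bar>f y - f x - (\<Sum>i\<in>S. w$i * pdir i f x)\<bar> \<le> e * (\<Sum>i\<in>S. \<bar>w$i\<bar>)"
        using insert.IH w by (simp add: y_def)
      have "\<And>s. ((\<lambda>s. f (y + s *\<^sub>R axis j 1)) has_real_derivative pdir j f (y + s *\<^sub>R axis j 1)) (at s)"
        by (rule shift_deriv, rule pdir_deriv0, rule ex)
      then obtain \<xi> where xi: "\<bar>\<xi>\<bar> \<le> \<bar>w$j\<bar>"
        "f (y + w$j *\<^sub>R axis j 1) - f (y + 0 *\<^sub>R axis j 1) = w$j * pdir j f (y + \<xi> *\<^sub>R axis j 1)"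
        using mvt_abs[of "\<lambda>s. f (y + s *\<^sub>R axis j 1)" "\<lambda>s. pdir j f (y + s *\<^sub>R axis j 1)" "w$j"] by blast
      have "norm ((y + \<xi> *\<^sub>R axis j 1) - x) \<le> norm w"
      proof (rule norm_le_componentwise_cart)
        fix k
        show "norm ((y + \<xi> *\<^sub>R axis j 1 - x) $ k) \<le> norm (w $ k)"
        proof -
          have c: "(y + \<xi> *\<^sub>R axis j 1 - x) $ k = (if k \<in> S then w$k else 0) + (if k = j then \<xi> else 0)"
            using insert.hyps(1) sum_axis_component[of S w k] by (simp add: y_def axis_def del: sum_component)
          show ?thesis unfolding c using xi(1) insert.hyps(2) by auto
        qed
      qed
      hence "dist (y + \<xi> *\<^sub>R axis j 1) x < D j" using w \<delta>le[of j] by (simp add: dist_norm)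
      hence dj: "\<bar>pdir j f (y + \<xi> *\<^sub>R axis j 1) - pdir j f x\<bar> < e" using D(2) by (simp add: dist_real_def)
      have step: "\<bar>f (y + w$j *\<^sub>R axis j 1) - f y - w$j * pdir j f x\<bar> \<le> e * \<bar>w$j\<bar>"
      proof -
        have "\<bar>f (y + w$j *\<^sub>R axis j 1) - f y - w$j * pdir j f x\<bar>
            = \<bar>w$j\<bar> * \<bar>pdir j f (y + \<xi> *\<^sub>R axis j 1) - pdir j f x\<bar>"
          using xi(2) by (simp add: abs_mult[symmetric] algebra_simps)
        also have "\<dots> \<le> \<bar>w$j\<bar> * e" using dj by (intro mult_left_mono) auto
        finally show ?thesis by (simp add: mult.commute)
      qed
      have eq: "x + (\<Sum>i\<in>insert j S. w$i *\<^sub>R axis i 1) = y + w$j *\<^sub>R axis j 1"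
        using insert.hyps by (simp add: y_def algebra_simps)
      show "\<bar>f (x + (\<Sum>i\<in>insert j S. w$i *\<^sub>R axis i 1)) - f x - (\<Sum>i\<in>insert j S. w$i * pdir i f x)\<bar>
        \<le> e * (\<Sum>i\<in>insert j S. \<bar>w$i\<bar>)"
        unfolding eq using insert.hyps IH step by (simp add: distrib_left)
    qed
  qed
  show ?thesis using key[of UNIV] \<delta> by (auto simp: sum_axis_UNIV)
qed

lemma arithP:
  fixes y h b c dA L M uA uB vA vB lapA lapB lphi TA TB lam :: real
  assumes "y > 0" "h \<ge> 1" "b > 0" "c > 0" "dA > 0" "L \<ge> 0"
    and p: "uB - uA = - y * h" and q: "vA - vB \<ge> - y * h"
    and "0 \<le> uA" "uA \<le> M" "0 \<le> uB" "0 \<le> vB"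
    and lapi: "lapB - lapA + y * lphi \<ge> 0" "lphi \<le> L"
    and ti: "TB - TA + y * lam * h \<le> 0"
    and TB: "TB = dA * lapB + b * uB * (1 - uB - c * vB)"
    and TA: "TA = dA * lapA + b * uA * (1 - uA - c * vA)"
    and lam: "lam > dA * L + b + b * c * M"
  shows False
proof -
  have id: "TB - TA = dA * (lapB - lapA) + b * (uB - uA) * (1 - uB - uA - c * vB) + b * c * uA * (vA - vB)"
    unfolding TA TB by (simp add: algebra_simps)
  have i1: "dA * (lapB - lapA) \<ge> - dA * y * L * h"
  proof -
    have "y * lphi \<le> y * L" using lapi(2) \<open>y > 0\<close> by (simp add: mult_left_mono)
    hence "lapB - lapA \<ge> - y * L" using lapi(1) by linarith
    hence "dA * (lapB - lapA) \<ge> dA * (- y * L)" using \<open>dA > 0\<close> by (intro mult_left_mono) auto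
    moreover have "dA * y * L * 1 \<le> dA * y * L * h"
      using assms by (intro mult_left_mono) (auto simp: mult_nonneg_nonneg)
    ultimately show ?thesis by simp
  qed
  have i2: "b * (uB - uA) * (1 - uB - uA - c * vB) \<ge> - b * y * h"
  proof -
    have "c * vB \<ge> 0" using \<open>c > 0\<close> \<open>0 \<le> vB\<close> by simp
    hence "1 - uB - uA - c * vB \<le> 1" using \<open>0 \<le> uA\<close> \<open>0 \<le> uB\<close> by linarith
    moreover have "b * y * h > 0" using \<open>b > 0\<close> \<open>y > 0\<close> \<open>h \<ge> 1\<close> by simp
    ultimately have "(b * y * h) * (1 - uB - uA - c * vB) \<le> (b * y * h) * 1"
      by (intro mult_left_mono) auto
    thus ?thesis unfolding p by (simp add: algebra_simps)
  qed
  have i3: "b * c * uA * (vA - vB) \<ge> - b * c * M * y * h"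
  proof -
    have "b * c * uA * (vA - vB) \<ge> b * c * uA * (- y * h)"
      using assms by (intro mult_left_mono) (auto simp: mult_nonneg_nonneg)
    moreover have "b * c * uA * (y * h) \<le> b * c * M * (y * h)"
      using assms by (intro mult_right_mono) (auto simp: mult_nonneg_nonneg)
    ultimately show ?thesis by (simp add: algebra_simps)
  qed
  have "lam - dA * L - b - b * c * M > 0" using lam by linarith
  moreover have "y * h > 0" using \<open>y > 0\<close> \<open>h \<ge> 1\<close> by simp
  ultimately have "y * h * (lam - dA * L - b - b * c * M) > 0" by simp
  hence "TB - TA + y * lam * h > 0" using id i1 i2 i3 by (simp add: algebra_simps)
  thus False using ti by simp
qed

lemma arithQ:
  fixes y h a m dB L M KA KB Kmax uA uB vA vB lapA lapB lphi TA TB lam :: real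
  assumes "y > 0" "h \<ge> 1" "a > 0" "m > 0" "dB > 0" "L \<ge> 0"
    and K: "0 \<le> KA" "KA \<le> Kmax" "KA \<le> KB"
    and q: "vA - vB = - y * h" and p: "uB - uA \<ge> - y * h"
    and "0 \<le> uA" "0 \<le> uB" "0 \<le> vA" "0 \<le> vB" "vB \<le> M"
    and lapi: "lapA - lapB + y * lphi \<ge> 0" "lphi \<le> L"
    and ti: "TA - TB + y * lam * h \<le> 0"
    and TA: "TA = dB * lapA + vA * (1 / (1 + KA * uA) - vA - a * uA - m * uA * vA)"
    and TB: "TB = dB * lapB + vB * (1 / (1 + KB * uB) - vB - a * uB - m * uB * vB)"
    and lam: "lam > dB * L + 1 + M * (Kmax + a + m * M)"
  shows False
proof -
  define R1 where "R1 = 1 / (1 + KA * uA) - (vA + vB) - a * uA - m * uA * (vA + vB)"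
  define S where "S = KA / ((1 + KA * uA) * (1 + KA * uB)) + a + m * vB"
  define third where "third = vB * (1 / (1 + KA * uB) - 1 / (1 + KB * uB))"
  have pos1: "1 + KA * uA > 0" "1 + KA * uB > 0" "1 + KB * uB > 0"
    using assms by (auto intro: add_pos_nonneg mult_nonneg_nonneg)
  have e1: "(uB - uA) * (KA / ((1 + KA * uA) * (1 + KA * uB))) = 1 / (1 + KA * uA) - 1 / (1 + KA * uB)"
    using pos1 by (simp add: field_simps)
  have e2: "vB * (uB - uA) * S = vB * ((uB - uA) * (KA / ((1 + KA * uA) * (1 + KA * uB)))) + vB * (uB - uA) * (a + m * vB)"
    unfolding S_def by (simp add: algebra_simps)
  have id: "TA - TB = dB * (lapA - lapB) + (vA - vB) * R1 + vB * (uB - uA) * S + third"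
    unfolding e2 e1 unfolding TA TB R1_def third_def
    by (simp add: algebra_simps diff_divide_distrib)
  have i1: "dB * (lapA - lapB) \<ge> - dB * y * L * h"
  proof -
    have "y * lphi \<le> y * L" using lapi(2) \<open>y > 0\<close> by (simp add: mult_left_mono)
    hence "lapA - lapB \<ge> - y * L" using lapi(1) by linarith
    hence "dB * (lapA - lapB) \<ge> dB * (- y * L)" using \<open>dB > 0\<close> by (intro mult_left_mono) auto
    moreover have "dB * y * L * 1 \<le> dB * y * L * h"
      using assms by (intro mult_left_mono) (auto simp: mult_nonneg_nonneg)
    ultimately show ?thesis by simp
  qed
  have R1le: "R1 \<le> 1"
  proof -
    have "1 / (1 + KA * uA) \<le> 1" using pos1 assms by (simp add: mult_nonneg_nonneg)
    moreover have "a * uA \<ge> 0" using \<open>a > 0\<close> \<open>0 \<le> uA\<close> by simp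
    moreover have "m * uA * (vA + vB) \<ge> 0" using \<open>m > 0\<close> \<open>0 \<le> uA\<close> \<open>0 \<le> vA\<close> \<open>0 \<le> vB\<close> by simp
    ultimately show ?thesis unfolding R1_def using \<open>0 \<le> vA\<close> \<open>0 \<le> vB\<close> by linarith
  qed
  have i2: "(vA - vB) * R1 \<ge> - y * h"
  proof -
    have "(y * h) * R1 \<le> (y * h) * 1" using R1le assms by (intro mult_left_mono) auto
    thus ?thesis unfolding q by simp
  qed
  have S0: "S \<ge> 0" unfolding S_def using assms pos1 by (simp add: mult_nonneg_nonneg)
  have Sle: "S \<le> Kmax + a + m * M"
  proof -
    have "KA / ((1 + KA * uA) * (1 + KA * uB)) \<le> KA"
    proof -
      have n1: "KA * uA \<ge> 0" "KA * uB \<ge> 0" using K(1) \<open>0 \<le> uA\<close> \<open>0 \<le> uB\<close> by simp_all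
      hence "(KA * uA) * (KA * uB) \<ge> 0" by simp
      hence "1 \<le> (1 + KA * uA) * (1 + KA * uB)" using n1 by (simp add: algebra_simps)
      thus ?thesis using K(1) pos1 by (simp add: divide_le_eq mult_le_cancel_left1)
    qed
    moreover have "m * vB \<le> m * M" using \<open>m > 0\<close> \<open>vB \<le> M\<close> by simp
    ultimately show ?thesis unfolding S_def using K by linarith
  qed
  have i3: "vB * (uB - uA) * S \<ge> - y * h * (M * (Kmax + a + m * M))"
  proof -
    have "vB * S \<ge> 0" using S0 assms by simp
    hence "(vB * S) * (uB - uA) \<ge> (vB * S) * (- y * h)" using p by (intro mult_left_mono) auto
    moreover have "vB * S \<le> M * (Kmax + a + m * M)" using assms S0 Sle by (intro mult_mono) auto
    hence "(vB * S) * (y * h) \<le> M * (Kmax + a + m * M) * (y * h)"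
      using assms by (intro mult_right_mono) auto
    ultimately show ?thesis by (simp add: algebra_simps)
  qed
  have i4: "third \<ge> 0"
  proof -
    have "KA * uB \<le> KB * uB" using assms by (simp add: mult_right_mono)
    hence "1 / (1 + KB * uB) \<le> 1 / (1 + KA * uB)" using pos1 by (simp add: frac_le)
    thus ?thesis unfolding third_def using \<open>0 \<le> vB\<close> by simp
  qed
  have "lam - dB * L - 1 - M * (Kmax + a + m * M) > 0" using lam by linarith
  moreover have "y * h > 0" using \<open>y > 0\<close> \<open>h \<ge> 1\<close> by simp
  ultimately have "y * h * (lam - dB * L - 1 - M * (Kmax + a + m * M)) > 0" by simp
  hence "TA - TB + y * lam * h > 0" using id i1 i2 i3 i4 by (simp add: algebra_simps)
  thus False using ti by simp
qed



lemma bl_scale: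
  assumes "bounded_linear D" shows "D (s *\<^sub>R v) = s * D v"
  using assms by (simp add: linear_simps)

lemma grad_sum_sq:
  fixes \<phi> :: "real^'n::finite \<Rightarrow> real"
  shows "(\<Sum>i\<in>UNIV. pdir i \<phi> x * pdir i \<phi> x) = norm (grad \<phi> x) ^ 2"
  by (simp add: power2_norm_eq_inner inner_vec_def grad_def)

lemma boundary_contra:
  fixes \<phi> w1 w2 :: "real^'n::finite \<Rightarrow> real"
  assumes Om: "\<Omega> = {x. \<phi> x < 0}" and fr: "frontier \<Omega> = {x. \<phi> x = 0}"
    and ex: "\<And>i y. pdir_exists i \<phi> y" and cont: "\<And>i. continuous_on UNIV (pdir i \<phi>)"
    and xs: "xs \<in> frontier \<Omega>" and g0: "grad \<phi> xs \<noteq> 0"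
    and D1: "(w1 has_derivative D1) (at xs within closure \<Omega>)" "D1 (outward_normal \<phi> xs) = 0"
    and D2: "(w2 has_derivative D2) (at xs within closure \<Omega>)" "D2 (outward_normal \<phi> xs) = 0"
    and \<kappa>: "\<kappa> > 0"
    and mn: "\<And>y. y \<in> closure \<Omega> \<Longrightarrow> w2 xs - w1 xs + \<kappa> * \<phi> xs \<le> w2 y - w1 y + \<kappa> * \<phi> y"
  shows False
proof -
  define g where "g = grad \<phi> xs"
  define \<nu> where "\<nu> = outward_normal \<phi> xs"
  have ng: "norm g > 0" using g0 by (simp add: g_def)
  have \<nu>g: "\<nu> = g /\<^sub>R norm g" by (simp add: \<nu>_def g_def outward_normal_def)
  have n\<nu>: "norm \<nu> = 1" using ng by (simp add: \<nu>g)
  define A where "A = (\<Sum>i\<in>UNIV. \<bar>\<nu>$i\<bar>)"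
  have A0: "A \<ge> 0" by (simp add: A_def sum_nonneg)
  define e where "e = norm g / (2 * (A + 1))"
  have e: "e > 0" using ng A0 by (simp add: e_def)
  have eA: "e * A \<le> norm g / 2"
  proof -
    have "e * A = norm g * A / (2 * (A + 1))" by (simp add: e_def)
    also have "\<dots> \<le> norm g * (A + 1) / (2 * (A + 1))"
      using ng A0 by (intro divide_right_mono mult_left_mono) auto
    also have "\<dots> = norm g / 2" using A0 by (simp add: field_simps)
    finally show ?thesis .
  qed
  obtain \<delta> where \<delta>: "\<delta> > 0" "\<And>w. norm w < \<delta> \<Longrightarrow>
     \<bar>\<phi> (xs + w) - \<phi> xs - (\<Sum>i\<in>UNIV. w$i * pdir i \<phi> xs)\<bar> \<le> e * (\<Sum>i\<in>UNIV. \<bar>w$i\<bar>)"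
    using first_order[OF ex cont e, of xs] by blast
  define e' where "e' = \<kappa> * norm g / 8"
  have e': "e' > 0" using \<kappa> ng by (simp add: e'_def)
  have bl1: "bounded_linear D1" and bl2: "bounded_linear D2"
    using D1(1) D2(1) by (auto simp: has_derivative_within_alt)
  obtain r1 where r1: "r1 > 0" "\<And>y. y \<in> closure \<Omega> \<Longrightarrow> norm (y - xs) < r1 \<Longrightarrow>
      norm (w1 y - w1 xs - D1 (y - xs)) \<le> e' * norm (y - xs)"
    using D1(1) e' unfolding has_derivative_within_alt by blast
  obtain r2 where r2: "r2 > 0" "\<And>y. y \<in> closure \<Omega> \<Longrightarrow> norm (y - xs) < r2 \<Longrightarrow>
      norm (w2 y - w2 xs - D2 (y - xs)) \<le> e' * norm (y - xs)"
    using D2(1) e' unfolding has_derivative_within_alt by blast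
  define s where "s = min \<delta> (min r1 r2) / 2"
  have s: "s > 0" "s < \<delta>" "s < r1" "s < r2" using \<delta> r1 r2 by (auto simp: s_def)
  define y where "y = xs + (- s) *\<^sub>R \<nu>"
  have yx: "y - xs = (- s) *\<^sub>R \<nu>" by (simp add: y_def)
  have nys: "norm (y - xs) = s" using s n\<nu> by (simp add: y_def)
  have phxs: "\<phi> xs = 0" using xs fr by simp
  have sumg: "(\<Sum>i\<in>UNIV. ((- s) *\<^sub>R \<nu>)$i * pdir i \<phi> xs) = - s * norm g"
  proof -
    have "(\<Sum>i\<in>UNIV. ((- s) *\<^sub>R \<nu>)$i * pdir i \<phi> xs) = (- s / norm g) * (\<Sum>i\<in>UNIV. pdir i \<phi> xs * pdir i \<phi> xs)"
      by (simp add: \<nu>g g_def grad_def sum_distrib_left divide_inverse algebra_simps)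
    also have "\<dots> = - s * norm g" using ng by (simp add: grad_sum_sq g_def power2_eq_square)
    finally show ?thesis .
  qed
  have suma: "(\<Sum>i\<in>UNIV. \<bar>((- s) *\<^sub>R \<nu>)$i\<bar>) = s * A"
    using s by (simp add: A_def sum_distrib_left abs_mult)
  have "\<phi> y - \<phi> xs + s * norm g \<le> e * (s * A)"
    using \<delta>(2)[of "(- s) *\<^sub>R \<nu>"] s n\<nu> sumg suma by (simp add: y_def)
  moreover have "e * (s * A) \<le> s * (norm g / 2)"
    using mult_left_mono[OF eA, of s] s by (simp add: algebra_simps)
  ultimately have phy: "\<phi> y \<le> - s * norm g / 2" using phxs by simp
  moreover have "s * norm g > 0" using s ng by simp
  ultimately have "\<phi> y < 0" by linarith
  hence "y \<in> \<Omega>" unfolding Om by simp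
  hence yO: "y \<in> closure \<Omega>" using closure_subset by auto
  have "D1 (y - xs) = (- s) * D1 \<nu>" unfolding yx by (rule bl_scale[OF bl1])
  also have "D1 \<nu> = 0" using D1(2) unfolding \<nu>_def .
  finally have "D1 (y - xs) = 0" by simp
  moreover have "norm (w1 y - w1 xs - D1 (y - xs)) \<le> e' * norm (y - xs)"
    using r1(2)[OF yO] nys s by simp
  ultimately have w1b: "\<bar>w1 y - w1 xs\<bar> \<le> e' * s" using nys by simp
  have "D2 (y - xs) = (- s) * D2 \<nu>" unfolding yx by (rule bl_scale[OF bl2])
  also have "D2 \<nu> = 0" using D2(2) unfolding \<nu>_def .
  finally have "D2 (y - xs) = 0" by simp
  moreover have "norm (w2 y - w2 xs - D2 (y - xs)) \<le> e' * norm (y - xs)"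
    using r2(2)[OF yO] nys s by simp
  ultimately have w2b: "\<bar>w2 y - w2 xs\<bar> \<le> e' * s" using nys by simp
  have "\<kappa> * (\<phi> y - \<phi> xs) \<le> \<kappa> * (- s * norm g / 2)" using mult_left_mono[OF phy, of \<kappa>] phxs \<kappa> by simp
  moreover have "2 * (e' * s) = \<kappa> * s * norm g / 4" by (simp add: e'_def)
  moreover have "\<kappa> * s * norm g > 0" using \<kappa> s ng by simp
  moreover have "\<kappa> * (- s * norm g / 2) = - (\<kappa> * s * norm g) / 2" by simp
  moreover have "w2 y - w1 y + \<kappa> * \<phi> y - (w2 xs - w1 xs + \<kappa> * \<phi> xs)
      = (w2 y - w2 xs) - (w1 y - w1 xs) + \<kappa> * (\<phi> y - \<phi> xs)" by (simp add: algebra_simps)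
  moreover have "w2 y - w2 xs \<le> e' * s" "- (w1 y - w1 xs) \<le> e' * s" using w1b w2b by linarith+
  ultimately have "w2 y - w1 y + \<kappa> * \<phi> y < w2 xs - w1 xs + \<kappa> * \<phi> xs"
    by linarith
  with mn[OF yO] show False by simp
qed

lemma cn_facts:
  assumes "classical_neumann \<Omega> \<nu> w"
  shows "continuous_on (closure \<Omega> \<times> {0..}) (\<lambda>p. w (fst p) (snd p))"
    and "\<And>x t. x \<in> \<Omega> \<Longrightarrow> t > 0 \<Longrightarrow> ((\<lambda>s. w x s) has_real_derivative tder w x t) (at t)"
    and "\<And>x t i. x \<in> \<Omega> \<Longrightarrow> t > 0 \<Longrightarrow> pdir_exists i (\<lambda>y. w y t) x"
    and "\<And>x t i j. x \<in> \<Omega> \<Longrightarrow> t > 0 \<Longrightarrow> pdir_exists j (pdir i (\<lambda>y. w y t)) x"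
    and "\<And>x t. t > 0 \<Longrightarrow> x \<in> frontier \<Omega> \<Longrightarrow>
          \<exists>D. ((\<lambda>y. w y t) has_derivative D) (at x within closure \<Omega>) \<and> D (\<nu> x) = 0"
  using assms unfolding classical_neumann_def tder_def
  by (auto simp: DERIV_deriv_iff_real_differentiable)

lemma cont_slice:
  assumes "continuous_on (closure \<Omega> \<times> {0..}) (\<lambda>p. w (fst p) (snd p))" "x \<in> closure \<Omega>"
  shows "continuous_on {0..} (w x)"
proof -
  have "continuous_on {0..} (\<lambda>t. (\<lambda>p. w (fst p) (snd p)) (x, t))"
    by (rule continuous_on_compose2[OF assms(1)]) (auto intro!: continuous_intros simp: assms(2))
  thus ?thesis by simp
qed

lemma left_limit_nonneg:
  fixes g :: "real \<Rightarrow> real"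
  assumes c: "continuous_on {0..} g" and ts: "0 < ts" and pos: "\<And>t. 0 \<le> t \<Longrightarrow> t < ts \<Longrightarrow> g t > 0"
  shows "g ts \<ge> 0"
proof (rule ccontr)
  assume "\<not> g ts \<ge> 0" hence neg: "g ts < 0" by simp
  obtain d where d: "d > 0" "\<And>t. t \<in> {0..} \<Longrightarrow> dist t ts < d \<Longrightarrow> dist (g t) (g ts) < - g ts"
    using c ts neg unfolding continuous_on_iff by (metis atLeast_iff less_eq_real_def neg_0_less_iff_less)
  define t where "t = ts - min d ts / 2"
  have t: "0 \<le> t" "t < ts" "dist t ts < d" using d ts by (auto simp: t_def dist_real_def)
  have "dist (g t) (g ts) < - g ts" using d(2)[of t] t by simp
  hence "g t < 0" by (simp add: dist_real_def)
  with pos[OF t(1) t(2)] show False by simp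
qed

lemma bound_compact:
  fixes f :: "'a::topological_space \<Rightarrow> real"
  assumes "continuous_on S f" "compact S"
  shows "\<exists>B. \<forall>x\<in>S. \<bar>f x\<bar> \<le> B"
proof -
  have "bounded (f ` S)" using compact_imp_bounded compact_continuous_image assms by blast
  then show ?thesis unfolding bounded_iff by auto
qed

lemma time_deriv_nonpos:
  fixes H :: "real \<Rightarrow> real"
  assumes der: "(H has_real_derivative D) (at ts)" and ts: "0 < ts"
    and pos: "\<And>t. 0 \<le> t \<Longrightarrow> t < ts \<Longrightarrow> H t > 0" and z: "H ts \<le> 0"
  shows "D \<le> 0"
proof (rule ccontr)
  assume "\<not> D \<le> 0" hence "D > 0" by simp
  then obtain d where d: "d > 0" "\<And>h. h > 0 \<Longrightarrow> h < d \<Longrightarrow> H (ts - h) < H ts"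
    using DERIV_pos_inc_left[OF der] by blast
  define h where "h = min d ts / 2"
  have h: "h > 0" "h < d" "h < ts" using d ts by (auto simp: h_def)
  have "H (ts - h) < H ts" using d(2) h by simp
  moreover have "H (ts - h) > 0" using pos h by simp
  ultimately show False using z by simp
qed



lemma spatial:
  fixes \<phi> :: "real^'n::finite \<Rightarrow> real" and w1 w2 :: "real^'n \<Rightarrow> real \<Rightarrow> real"
  assumes op: "open \<Omega>" and xs: "xs \<in> \<Omega>" and ts: "ts > 0"
    and cn1: "classical_neumann \<Omega> \<nu> w1" and cn2: "classical_neumann \<Omega> \<nu> w2"
    and phex: "\<And>i y. pdir_exists i \<phi> y" and ddphex: "\<And>i j y. pdir_exists j (pdir i \<phi>) y"
    and mn: "\<And>y. y \<in> \<Omega> \<Longrightarrow> w2 xs ts - w1 xs ts + \<kappa> * (C + \<phi> xs) \<le> w2 y ts - w1 y ts + \<kappa> * (C + \<phi> y)"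
  shows "lap (\<lambda>y. w2 y ts) xs - lap (\<lambda>y. w1 y ts) xs + \<kappa> * lap \<phi> xs \<ge> 0"
proof -
  have "\<forall>i. 0 \<le> pdir i (pdir i (\<lambda>y. w2 y ts)) xs - pdir i (pdir i (\<lambda>y. w1 y ts)) xs + \<kappa> * pdir i (pdir i \<phi>) xs"
  proof
    fix i
    show "0 \<le> pdir i (pdir i (\<lambda>y. w2 y ts)) xs - pdir i (pdir i (\<lambda>y. w1 y ts)) xs + \<kappa> * pdir i (pdir i \<phi>) xs"
    proof (rule interior_min_second[OF op xs, where F="\<lambda>y. w2 y ts - w1 y ts + \<kappa> * (C + \<phi> y)" and e="axis i 1"
          and F'="\<lambda>y. pdir i (\<lambda>y. w2 y ts) y - pdir i (\<lambda>y. w1 y ts) y + \<kappa> * pdir i \<phi> y"])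
      fix y assume "y \<in> \<Omega>"
      then show "w2 xs ts - w1 xs ts + \<kappa> * (C + \<phi> xs) \<le> w2 y ts - w1 y ts + \<kappa> * (C + \<phi> y)" by (rule mn)
    next
      fix y assume y: "y \<in> \<Omega>"
      have h1: "((\<lambda>s. w1 (y + s *\<^sub>R axis i 1) ts) has_real_derivative pdir i (\<lambda>y. w1 y ts) y) (at 0)"
        using pdir_deriv0[OF cn_facts(3)[OF cn1 y ts]] by simp
      have h2: "((\<lambda>s. w2 (y + s *\<^sub>R axis i 1) ts) has_real_derivative pdir i (\<lambda>y. w2 y ts) y) (at 0)"
        using pdir_deriv0[OF cn_facts(3)[OF cn2 y ts]] by simp
      have h3: "((\<lambda>s. \<phi> (y + s *\<^sub>R axis i 1)) has_real_derivative pdir i \<phi> y) (at 0)"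
        using pdir_deriv0[OF phex] by simp
      show "((\<lambda>s. w2 (y + s *\<^sub>R axis i 1) ts - w1 (y + s *\<^sub>R axis i 1) ts + \<kappa> * (C + \<phi> (y + s *\<^sub>R axis i 1)))
          has_real_derivative pdir i (\<lambda>y. w2 y ts) y - pdir i (\<lambda>y. w1 y ts) y + \<kappa> * pdir i \<phi> y) (at 0)"
        using DERIV_add[OF DERIV_diff[OF h2 h1] DERIV_cmult[OF DERIV_add[OF DERIV_const h3], of \<kappa>]] by simp
    next
      have g1: "((\<lambda>s. pdir i (\<lambda>y. w1 y ts) (xs + s *\<^sub>R axis i 1)) has_real_derivative pdir i (pdir i (\<lambda>y. w1 y ts)) xs) (at 0)"
        by (rule pdir_deriv0[OF cn_facts(4)[OF cn1 xs ts]])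
      have g2: "((\<lambda>s. pdir i (\<lambda>y. w2 y ts) (xs + s *\<^sub>R axis i 1)) has_real_derivative pdir i (pdir i (\<lambda>y. w2 y ts)) xs) (at 0)"
        by (rule pdir_deriv0[OF cn_facts(4)[OF cn2 xs ts]])
      have g3: "((\<lambda>s. pdir i \<phi> (xs + s *\<^sub>R axis i 1)) has_real_derivative pdir i (pdir i \<phi>) xs) (at 0)"
        by (rule pdir_deriv0[OF ddphex])
      show "((\<lambda>s. pdir i (\<lambda>y. w2 y ts) (xs + s *\<^sub>R axis i 1) - pdir i (\<lambda>y. w1 y ts) (xs + s *\<^sub>R axis i 1)
            + \<kappa> * pdir i \<phi> (xs + s *\<^sub>R axis i 1))
          has_real_derivative pdir i (pdir i (\<lambda>y. w2 y ts)) xs - pdir i (pdir i (\<lambda>y. w1 y ts)) xs + \<kappa> * pdir i (pdir i \<phi>) xs) (at 0)"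
        using DERIV_add[OF DERIV_diff[OF g2 g1] DERIV_cmult[OF g3, of \<kappa>]] by simp
    qed
  qed
  then have "0 \<le> (\<Sum>i\<in>UNIV. pdir i (pdir i (\<lambda>y. w2 y ts)) xs - pdir i (pdir i (\<lambda>y. w1 y ts)) xs + \<kappa> * pdir i (pdir i \<phi>) xs)"
    by (simp add: sum_nonneg)
  thus ?thesis by (simp add: lap_def sum.distrib sum_subtractf sum_distrib_left)
qed

lemma timed:
  fixes \<phi> :: "real^'n::finite \<Rightarrow> real" and w1 w2 :: "real^'n \<Rightarrow> real \<Rightarrow> real"
  assumes xs: "xs \<in> \<Omega>" and ts: "ts > 0"
    and cn1: "classical_neumann \<Omega> \<nu> w1" and cn2: "classical_neumann \<Omega> \<nu> w2"
    and pos: "\<And>t. 0 \<le> t \<Longrightarrow> t < ts \<Longrightarrow> w2 xs t - w1 xs t + \<epsilon> * exp (lam * t) * (C + \<phi> xs) > 0"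
    and z: "w2 xs ts - w1 xs ts + \<epsilon> * exp (lam * ts) * (C + \<phi> xs) \<le> 0"
  shows "tder w2 xs ts - tder w1 xs ts + (\<epsilon> * exp (lam * ts)) * lam * (C + \<phi> xs) \<le> 0"
proof -
  have he: "((\<lambda>t. exp (lam * t)) has_real_derivative exp (lam * ts) * lam) (at ts)"
    by (auto intro!: derivative_eq_intros)
  have d: "((\<lambda>t. w2 xs t - w1 xs t + \<epsilon> * exp (lam * t) * (C + \<phi> xs)) has_real_derivative
      tder w2 xs ts - tder w1 xs ts + (\<epsilon> * exp (lam * ts)) * lam * (C + \<phi> xs)) (at ts)"
    using DERIV_add[OF DERIV_diff[OF cn_facts(2)[OF cn2 xs ts] cn_facts(2)[OF cn1 xs ts]]
        DERIV_cmult_right[OF DERIV_cmult[OF he, of \<epsilon>], of "C + \<phi> xs"]]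
    by (simp add: mult.assoc)
  show ?thesis by (rule time_deriv_nonpos[OF d ts pos z])
qed

lemma comparison:
  fixes \<Omega> :: "(real^'n::finite) set" and \<phi> :: "real^'n \<Rightarrow> real" and Ka Kb :: "real^'n \<Rightarrow> real"
    and a b c m d1 d2 u0 v0 Kmax :: real
    and u1 v1 u2 v2 :: "real^'n \<Rightarrow> real \<Rightarrow> real"
  assumes dom: "smooth_bdd_domain \<Omega> \<phi>"
    and pos: "a > 0" "b > 0" "c > 0" "m > 0" "d1 > 0" "d2 > 0"
    and K: "\<And>x. x \<in> \<Omega> \<Longrightarrow> 0 \<le> Ka x \<and> Ka x \<le> Kb x \<and> Ka x \<le> Kmax"
    and s1: "fear_solution \<Omega> (outward_normal \<phi>) a b c m d1 d2 Ka u0 v0 u1 v1"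
    and s2: "fear_solution \<Omega> (outward_normal \<phi>) a b c m d1 d2 Kb u0 v0 u2 v2"
  shows "\<forall>x\<in>\<Omega>. \<forall>t\<ge>0. v2 x t \<le> v1 x t"
proof -
  have op: "open \<Omega>" and bd: "bounded \<Omega>" and ne: "\<Omega> \<noteq> {}" and sm: "smooth_fn \<phi>"
    and Om: "\<Omega> = {x. \<phi> x < 0}" and fr: "frontier \<Omega> = {x. \<phi> x = 0}"
    and gr: "\<And>x. x \<in> frontier \<Omega> \<Longrightarrow> grad \<phi> x \<noteq> 0"
    using dom unfolding smooth_bdd_domain_def by auto
  have phc: "continuous_on UNIV \<phi>" using sm unfolding smooth_fn_def by (metis iter_pd.simps(1))
  have phex: "\<And>i y. pdir_exists i \<phi> y" using sm unfolding smooth_fn_def by (metis iter_pd.simps(1))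
  have dphc: "\<And>i. continuous_on UNIV (pdir i \<phi>)" using sm unfolding smooth_fn_def
    by (metis iter_pd.simps)
  have ddphex: "\<And>i j y. pdir_exists j (pdir i \<phi>) y" using sm unfolding smooth_fn_def
    by (metis iter_pd.simps)
  have lapc: "continuous_on UNIV (lap \<phi>)"
  proof -
    have "\<And>i. continuous_on UNIV (pdir i (pdir i \<phi>))" using sm unfolding smooth_fn_def
      by (metis iter_pd.simps)
    hence "continuous_on UNIV (\<lambda>x. \<Sum>i\<in>UNIV. pdir i (pdir i \<phi>) x)"
      by (intro continuous_on_sum) auto
    thus ?thesis unfolding lap_def[abs_def] by simp
  qed
  have cn1u: "classical_neumann \<Omega> (outward_normal \<phi>) u1" and cn1v: "classical_neumann \<Omega> (outward_normal \<phi>) v1"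
    and cn2u: "classical_neumann \<Omega> (outward_normal \<phi>) u2" and cn2v: "classical_neumann \<Omega> (outward_normal \<phi>) v2"
    using s1 s2 unfolding fear_solution_def by auto
  have nn1: "\<And>x t. x \<in> closure \<Omega> \<Longrightarrow> t \<ge> 0 \<Longrightarrow> u1 x t \<ge> 0 \<and> v1 x t \<ge> 0"
    and nn2: "\<And>x t. x \<in> closure \<Omega> \<Longrightarrow> t \<ge> 0 \<Longrightarrow> u2 x t \<ge> 0 \<and> v2 x t \<ge> 0"
    and in1: "\<And>x. x \<in> closure \<Omega> \<Longrightarrow> u1 x 0 = u0 \<and> v1 x 0 = v0"
    and in2: "\<And>x. x \<in> closure \<Omega> \<Longrightarrow> u2 x 0 = u0 \<and> v2 x 0 = v0"
    using s1 s2 unfolding fear_solution_def by auto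
  have eq1: "\<And>x t. x \<in> \<Omega> \<Longrightarrow> t > 0 \<Longrightarrow>
        tder u1 x t = d1 * lap (\<lambda>y. u1 y t) x + b * u1 x t * (1 - u1 x t - c * v1 x t) \<and>
        tder v1 x t = d2 * lap (\<lambda>y. v1 y t) x
           + v1 x t * (1 / (1 + Ka x * u1 x t) - v1 x t - a * u1 x t - m * u1 x t * v1 x t)"
    using s1 unfolding fear_solution_def by auto
  have eq2: "\<And>x t. x \<in> \<Omega> \<Longrightarrow> t > 0 \<Longrightarrow>
        tder u2 x t = d1 * lap (\<lambda>y. u2 y t) x + b * u2 x t * (1 - u2 x t - c * v2 x t) \<and>
        tder v2 x t = d2 * lap (\<lambda>y. v2 y t) x
           + v2 x t * (1 / (1 + Kb x * u2 x t) - v2 x t - a * u2 x t - m * u2 x t * v2 x t)"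
    using s2 unfolding fear_solution_def by auto
  have ccl: "compact (closure \<Omega>)" using bd by (simp add: compact_closure)
  have main: "\<forall>x\<in>closure \<Omega>. \<forall>t\<in>{0..T}. u1 x t \<le> u2 x t \<and> v2 x t \<le> v1 x t" if T: "T > 0" for T
  proof -
    define K0 where "K0 = closure \<Omega> \<times> {0..T}"
    have cK0: "compact K0" unfolding K0_def using ccl by (intro compact_Times) auto
    have K0sub: "K0 \<subseteq> closure \<Omega> \<times> {0..}" by (auto simp: K0_def)
    have cw: "continuous_on K0 (\<lambda>p. w (fst p) (snd p))" if "classical_neumann \<Omega> (outward_normal \<phi>) w" for w
      using continuous_on_subset[OF cn_facts(1)[OF that] K0sub] .
    obtain B1 where B1: "\<forall>p\<in>K0. \<bar>u1 (fst p) (snd p)\<bar> \<le> B1" using bound_compact[OF cw[OF cn1u] cK0] by blast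
    obtain B2 where B2: "\<forall>p\<in>K0. \<bar>u2 (fst p) (snd p)\<bar> \<le> B2" using bound_compact[OF cw[OF cn2u] cK0] by blast
    obtain B3 where B3: "\<forall>p\<in>K0. \<bar>v1 (fst p) (snd p)\<bar> \<le> B3" using bound_compact[OF cw[OF cn1v] cK0] by blast
    obtain B4 where B4: "\<forall>p\<in>K0. \<bar>v2 (fst p) (snd p)\<bar> \<le> B4" using bound_compact[OF cw[OF cn2v] cK0] by blast
    define M where "M = max 0 (max (max B1 B2) (max B3 B4))"
    have M0: "M \<ge> 0" by (simp add: M_def)
    have Mb: "u1 x t \<le> M \<and> u2 x t \<le> M \<and> v1 x t \<le> M \<and> v2 x t \<le> M"
      if "x \<in> closure \<Omega>" "0 \<le> t" "t \<le> T" for x t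
    proof -
      have "(x, t) \<in> K0" using that by (simp add: K0_def)
      thus ?thesis using B1 B2 B3 B4 unfolding M_def by force
    qed
    obtain Bp where Bp: "\<forall>x\<in>closure \<Omega>. \<bar>\<phi> x\<bar> \<le> Bp"
      using bound_compact[OF continuous_on_subset[OF phc] ccl] by blast
    obtain BL where BL: "\<forall>x\<in>closure \<Omega>. \<bar>lap \<phi> x\<bar> \<le> BL"
      using bound_compact[OF continuous_on_subset[OF lapc] ccl] by blast
    define L where "L = max 0 BL"
    have L0: "L \<ge> 0" by (simp add: L_def)
    have Lb: "lap \<phi> x \<le> L" if "x \<in> closure \<Omega>" for x using BL that unfolding L_def by force
    define C where "C = Bp + 1"
    have hge: "C + \<phi> x \<ge> 1" if "x \<in> closure \<Omega>" for x using Bp that unfolding C_def by force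
    define lam where "lam = d1 * L + b + b * c * M + d2 * L + 1 + \<bar>M * (Kmax + a + m * M)\<bar> + 1"
    have lam1: "lam > d1 * L + b + b * c * M" using pos L0 M0 unfolding lam_def
      by (smt (verit) mult_nonneg_nonneg)
    have lam2: "lam > d2 * L + 1 + M * (Kmax + a + m * M)" using pos L0 M0 unfolding lam_def
      by (smt (verit) mult_nonneg_nonneg)
    define P where "P \<epsilon> x t = u2 x t - u1 x t + \<epsilon> * exp (lam * t) * (C + \<phi> x)" for \<epsilon> x t
    define Q where "Q \<epsilon> x t = v1 x t - v2 x t + \<epsilon> * exp (lam * t) * (C + \<phi> x)" for \<epsilon> x t
    have pq: "\<forall>x\<in>closure \<Omega>. \<forall>t\<in>{0..T}. P \<epsilon> x t > 0 \<and> Q \<epsilon> x t > 0" if \<epsilon>: "\<epsilon> > 0" for \<epsilon>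
    proof (rule ccontr)
      assume nt: "\<not> (\<forall>x\<in>closure \<Omega>. \<forall>t\<in>{0..T}. P \<epsilon> x t > 0 \<and> Q \<epsilon> x t > 0)"
      define S where "S = {p\<in>K0. P \<epsilon> (fst p) (snd p) \<le> 0} \<union> {p\<in>K0. Q \<epsilon> (fst p) (snd p) \<le> 0}"
      have phcK: "continuous_on K0 (\<lambda>p. \<phi> (fst p))"
        by (rule continuous_on_compose2[OF phc continuous_on_fst]) auto
      have contP: "continuous_on K0 (\<lambda>p. P \<epsilon> (fst p) (snd p))"
        unfolding P_def by (intro continuous_intros cw cn2u cn1u phcK)
      have contQ: "continuous_on K0 (\<lambda>p. Q \<epsilon> (fst p) (snd p))"
        unfolding Q_def by (intro continuous_intros cw cn2v cn1v phcK)
      have clK0: "closed K0" using cK0 by (rule compact_imp_closed)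
      have "closed S" unfolding S_def
        by (intro closed_Un continuous_on_closed_Collect_le[OF contP continuous_on_const clK0]
            continuous_on_closed_Collect_le[OF contQ continuous_on_const clK0])
      moreover have "S = K0 \<inter> S" by (auto simp: S_def)
      ultimately have cS: "compact S" using compact_Int_closed[OF cK0] by metis
      have Sne: "S \<noteq> {}" using nt by (force simp: S_def K0_def not_less)
      have "compact (snd ` S)" by (rule compact_continuous_image[OF _ cS]) (intro continuous_intros)
      then obtain tm where tm: "tm \<in> snd ` S" "\<And>t. t \<in> snd ` S \<Longrightarrow> tm \<le> t"
        using compact_attains_inf[of "snd ` S"] Sne by blast
      then obtain xs ts where pS: "(xs, ts) \<in> S" and tmin: "\<And>p. p \<in> S \<Longrightarrow> ts \<le> snd p"
        by force
      have xsc: "xs \<in> closure \<Omega>" and ts0: "0 \<le> ts" and tsT: "ts \<le> T"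
        and PQ: "P \<epsilon> xs ts \<le> 0 \<or> Q \<epsilon> xs ts \<le> 0"
        using pS by (auto simp: S_def K0_def)
      have before: "P \<epsilon> x t > 0 \<and> Q \<epsilon> x t > 0" if "x \<in> closure \<Omega>" "0 \<le> t" "t < ts" for x t
      proof (rule ccontr)
        assume "\<not> (P \<epsilon> x t > 0 \<and> Q \<epsilon> x t > 0)"
        hence "(x, t) \<in> S" using that tsT by (auto simp: S_def K0_def)
        from tmin[OF this] that show False by simp
      qed
      have at0: "P \<epsilon> x 0 > 0 \<and> Q \<epsilon> x 0 > 0" if "x \<in> closure \<Omega>" for x
        using in1[OF that] in2[OF that] hge[OF that] \<epsilon> by (simp add: P_def Q_def)
      have tsp: "ts > 0"
      proof (rule ccontr)
        assume "\<not> ts > 0" hence "ts = 0" using ts0 by simp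
        thus False using PQ at0[OF xsc] by auto
      qed
      have atts: "P \<epsilon> x ts \<ge> 0 \<and> Q \<epsilon> x ts \<ge> 0" if x: "x \<in> closure \<Omega>" for x
      proof
        have "continuous_on {0..} (\<lambda>t. P \<epsilon> x t)" unfolding P_def
          by (intro continuous_intros cont_slice[OF cn_facts(1)[OF cn2u] x] cont_slice[OF cn_facts(1)[OF cn1u] x])
        then show "P \<epsilon> x ts \<ge> 0" by (rule left_limit_nonneg[OF _ tsp]) (use before[OF x] in blast)
        have "continuous_on {0..} (\<lambda>t. Q \<epsilon> x t)" unfolding Q_def
          by (intro continuous_intros cont_slice[OF cn_facts(1)[OF cn1v] x] cont_slice[OF cn_facts(1)[OF cn2v] x])
        then show "Q \<epsilon> x ts \<ge> 0" by (rule left_limit_nonneg[OF _ tsp]) (use before[OF x] in blast)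
      qed
      define \<kappa> where "\<kappa> = \<epsilon> * exp (lam * ts)"
      have \<kappa>: "\<kappa> > 0" using \<epsilon> by (simp add: \<kappa>_def)
      have Pk: "P \<epsilon> x ts = u2 x ts - u1 x ts + \<kappa> * (C + \<phi> x)" for x by (simp add: P_def \<kappa>_def)
      have Qk: "Q \<epsilon> x ts = v1 x ts - v2 x ts + \<kappa> * (C + \<phi> x)" for x by (simp add: Q_def \<kappa>_def)
      have "xs \<in> \<Omega> \<or> xs \<in> frontier \<Omega>" using xsc closure_Un_frontier by blast
      then show False
      proof
        assume xsO: "xs \<in> \<Omega>"
        have xsb: "u1 xs ts \<le> M \<and> u2 xs ts \<le> M \<and> v1 xs ts \<le> M \<and> v2 xs ts \<le> M" using Mb[OF xsc ts0 tsT] .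
        have xsn: "u1 xs ts \<ge> 0 \<and> v1 xs ts \<ge> 0 \<and> u2 xs ts \<ge> 0 \<and> v2 xs ts \<ge> 0"
          using nn1[OF xsc ts0] nn2[OF xsc ts0] by auto
        have h1: "C + \<phi> xs \<ge> 1" using hge[OF xsc] .
        have Lx: "lap \<phi> xs \<le> L" using Lb[OF xsc] .
        have E1: "tder u1 xs ts = d1 * lap (\<lambda>y. u1 y ts) xs + b * u1 xs ts * (1 - u1 xs ts - c * v1 xs ts)"
          "tder v1 xs ts = d2 * lap (\<lambda>y. v1 y ts) xs
           + v1 xs ts * (1 / (1 + Ka xs * u1 xs ts) - v1 xs ts - a * u1 xs ts - m * u1 xs ts * v1 xs ts)"
          using eq1[OF xsO tsp] by auto
        have E2: "tder u2 xs ts = d1 * lap (\<lambda>y. u2 y ts) xs + b * u2 xs ts * (1 - u2 xs ts - c * v2 xs ts)"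
          "tder v2 xs ts = d2 * lap (\<lambda>y. v2 y ts) xs
           + v2 xs ts * (1 / (1 + Kb xs * u2 xs ts) - v2 xs ts - a * u2 xs ts - m * u2 xs ts * v2 xs ts)"
          using eq2[OF xsO tsp] by auto
        from PQ show False
        proof
          assume Pz: "P \<epsilon> xs ts \<le> 0"
          have sp: "lap (\<lambda>y. u2 y ts) xs - lap (\<lambda>y. u1 y ts) xs + \<kappa> * lap \<phi> xs \<ge> 0"
          proof (rule spatial[OF op xsO tsp cn1u cn2u phex ddphex])
            fix y assume "y \<in> \<Omega>"
            hence "P \<epsilon> y ts \<ge> 0" using atts closure_subset by blast
            thus "u2 xs ts - u1 xs ts + \<kappa> * (C + \<phi> xs) \<le> u2 y ts - u1 y ts + \<kappa> * (C + \<phi> y)"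
              using Pz unfolding Pk by linarith
          qed
          have tm: "tder u2 xs ts - tder u1 xs ts + (\<epsilon> * exp (lam * ts)) * lam * (C + \<phi> xs) \<le> 0"
          proof (rule timed[OF xsO tsp cn1u cn2u])
            fix t :: real assume "0 \<le> t" "t < ts"
            then show "u2 xs t - u1 xs t + \<epsilon> * exp (lam * t) * (C + \<phi> xs) > 0"
              using before[OF xsc] unfolding P_def by blast
          next
            show "u2 xs ts - u1 xs ts + \<epsilon> * exp (lam * ts) * (C + \<phi> xs) \<le> 0" using Pz unfolding P_def .
          qed
          have pe: "u2 xs ts - u1 xs ts = - \<kappa> * (C + \<phi> xs)" using Pz atts[OF xsc] unfolding Pk by linarith
          have qe: "v1 xs ts - v2 xs ts \<ge> - \<kappa> * (C + \<phi> xs)" using atts[OF xsc] unfolding Qk by linarith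
          show False
            by (rule arithP[where y=\<kappa> and h="C + \<phi> xs" and b=b and c=c and dA=d1 and L=L and M=M
                and uA="u1 xs ts" and uB="u2 xs ts" and vA="v1 xs ts" and vB="v2 xs ts"
                and lapA="lap (\<lambda>y. u1 y ts) xs" and lapB="lap (\<lambda>y. u2 y ts) xs" and lphi="lap \<phi> xs"
                and TA="tder u1 xs ts" and TB="tder u2 xs ts" and lam=lam])
              (use \<kappa> h1 pos L0 pe qe xsb xsn sp Lx tm E1 E2 lam1 in \<open>simp_all add: \<kappa>_def\<close>)
        next
          assume Qz: "Q \<epsilon> xs ts \<le> 0"
          have sp: "lap (\<lambda>y. v1 y ts) xs - lap (\<lambda>y. v2 y ts) xs + \<kappa> * lap \<phi> xs \<ge> 0"
          proof (rule spatial[OF op xsO tsp cn2v cn1v phex ddphex])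
            fix y assume "y \<in> \<Omega>"
            hence "Q \<epsilon> y ts \<ge> 0" using atts closure_subset by blast
            thus "v1 xs ts - v2 xs ts + \<kappa> * (C + \<phi> xs) \<le> v1 y ts - v2 y ts + \<kappa> * (C + \<phi> y)"
              using Qz unfolding Qk by linarith
          qed
          have tm: "tder v1 xs ts - tder v2 xs ts + (\<epsilon> * exp (lam * ts)) * lam * (C + \<phi> xs) \<le> 0"
          proof (rule timed[OF xsO tsp cn2v cn1v])
            fix t :: real assume "0 \<le> t" "t < ts"
            then show "v1 xs t - v2 xs t + \<epsilon> * exp (lam * t) * (C + \<phi> xs) > 0"
              using before[OF xsc] unfolding Q_def by blast
          next
            show "v1 xs ts - v2 xs ts + \<epsilon> * exp (lam * ts) * (C + \<phi> xs) \<le> 0" using Qz unfolding Q_def .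
          qed
          have qe: "v1 xs ts - v2 xs ts = - \<kappa> * (C + \<phi> xs)" using Qz atts[OF xsc] unfolding Qk by linarith
          have pe: "u2 xs ts - u1 xs ts \<ge> - \<kappa> * (C + \<phi> xs)" using atts[OF xsc] unfolding Pk by linarith
          have Kx: "0 \<le> Ka xs" "Ka xs \<le> Kmax" "Ka xs \<le> Kb xs" using K[OF xsO] by auto
          show False
            by (rule arithQ[where y=\<kappa> and h="C + \<phi> xs" and a=a and m=m and dB=d2 and L=L and M=M
                and KA="Ka xs" and KB="Kb xs" and Kmax=Kmax
                and uA="u1 xs ts" and uB="u2 xs ts" and vA="v1 xs ts" and vB="v2 xs ts"
                and lapA="lap (\<lambda>y. v1 y ts) xs" and lapB="lap (\<lambda>y. v2 y ts) xs" and lphi="lap \<phi> xs"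
                and TA="tder v1 xs ts" and TB="tder v2 xs ts" and lam=lam])
              (use \<kappa> h1 pos L0 pe qe xsb xsn sp Lx tm E1 E2 lam2 Kx in \<open>simp_all add: \<kappa>_def\<close>)
        qed
      next
        assume xsF: "xs \<in> frontier \<Omega>"
        have g0: "grad \<phi> xs \<noteq> 0" using gr[OF xsF] .
        from PQ show False
        proof
          assume Pz: "P \<epsilon> xs ts \<le> 0"
          obtain D1 where D1: "((\<lambda>y. u1 y ts) has_derivative D1) (at xs within closure \<Omega>)" "D1 (outward_normal \<phi> xs) = 0"
            using cn_facts(5)[OF cn1u tsp xsF] by blast
          obtain D2 where D2: "((\<lambda>y. u2 y ts) has_derivative D2) (at xs within closure \<Omega>)" "D2 (outward_normal \<phi> xs) = 0"
            using cn_facts(5)[OF cn2u tsp xsF] by blast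
          show False
          proof (rule boundary_contra[OF Om fr phex dphc xsF g0 D1 D2 \<kappa>])
            fix y assume "y \<in> closure \<Omega>"
            hence "P \<epsilon> y ts \<ge> 0" using atts by blast
            thus "u2 xs ts - u1 xs ts + \<kappa> * \<phi> xs \<le> u2 y ts - u1 y ts + \<kappa> * \<phi> y"
              using Pz unfolding Pk by (simp add: algebra_simps)
          qed
        next
          assume Qz: "Q \<epsilon> xs ts \<le> 0"
          obtain D1 where D1: "((\<lambda>y. v2 y ts) has_derivative D1) (at xs within closure \<Omega>)" "D1 (outward_normal \<phi> xs) = 0"
            using cn_facts(5)[OF cn2v tsp xsF] by blast
          obtain D2 where D2: "((\<lambda>y. v1 y ts) has_derivative D2) (at xs within closure \<Omega>)" "D2 (outward_normal \<phi> xs) = 0"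
            using cn_facts(5)[OF cn1v tsp xsF] by blast
          show False
          proof (rule boundary_contra[OF Om fr phex dphc xsF g0 D1 D2 \<kappa>])
            fix y assume "y \<in> closure \<Omega>"
            hence "Q \<epsilon> y ts \<ge> 0" using atts by blast
            thus "v1 xs ts - v2 xs ts + \<kappa> * \<phi> xs \<le> v1 y ts - v2 y ts + \<kappa> * \<phi> y"
              using Qz unfolding Qk by (simp add: algebra_simps)
          qed
        qed
      qed
    qed
    show ?thesis
    proof (intro ballI conjI)
      fix x t assume x: "x \<in> closure \<Omega>" and t: "t \<in> {0..T}"
      define B where "B = exp (lam * t) * (C + \<phi> x)"
      have Bpos: "B > 0" using hge[OF x] by (simp add: B_def)
      have key: "A \<ge> 0" if "\<And>\<epsilon>. \<epsilon> > 0 \<Longrightarrow> A + \<epsilon> * B > 0" for A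
      proof (rule ccontr)
        assume "\<not> A \<ge> 0"
        hence "- A / B > 0" using Bpos by (simp add: divide_neg_pos)
        from that[OF this] have "A + (- A / B) * B > 0" .
        moreover have "(- A / B) * B = - A" using Bpos by simp
        ultimately show False by simp
      qed
      have "u2 x t - u1 x t \<ge> 0"
      proof (rule key)
        fix \<epsilon> :: real assume "\<epsilon> > 0"
        from pq[OF this] x t have "P \<epsilon> x t > 0" by blast
        thus "u2 x t - u1 x t + \<epsilon> * B > 0" by (simp add: P_def B_def mult.assoc)
      qed
      thus "u1 x t \<le> u2 x t" by simp
      have "v1 x t - v2 x t \<ge> 0"
      proof (rule key)
        fix \<epsilon> :: real assume "\<epsilon> > 0"
        from pq[OF this] x t have "Q \<epsilon> x t > 0" by blast
        thus "v1 x t - v2 x t + \<epsilon> * B > 0" by (simp add: Q_def B_def mult.assoc)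
      qed
      thus "v2 x t \<le> v1 x t" by simp
    qed
  qed
  show ?thesis
  proof (intro ballI allI impI)
    fix x t assume "x \<in> \<Omega>" "(0::real) \<le> t"
    then show "v2 x t \<le> v1 x t" using main[of "t + 1"] closure_subset by force
  qed
qed


theorem theorem13:
  fixes \<Omega> :: "(real^'n::finite) set" and \<phi> :: "real^'n \<Rightarrow> real" and k :: "real^'n \<Rightarrow> real"
    and a b c m d1 d2 u0 v0 :: real
    and u v uh vh ut vt :: "real^'n \<Rightarrow> real \<Rightarrow> real"
  assumes dom: "smooth_bdd_domain \<Omega> \<phi>"
    and pos: "a > 0" "b > 0" "c > 0" "m > 0" "d1 > 0" "d2 > 0"
    and k_C1: "k differentiable_on \<Omega>" "\<forall>i. continuous_on \<Omega> (pdir i k)"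
    and k_nonneg: "\<forall>x\<in>\<Omega>. k x \<ge> 0"
    and k_bdd: "bdd_above (k ` \<Omega>)"
    and k_nonvanish: "\<forall>S. S \<subseteq> \<Omega> \<longrightarrow> S \<in> sets lebesgue \<longrightarrow> emeasure lebesgue S > 0 \<longrightarrow> (\<exists>x\<in>S. k x \<noteq> 0)"
    and init: "u0 > 0" "v0 > 0"
    and sol: "fear_solution \<Omega> (outward_normal \<phi>) a b c m d1 d2 k u0 v0 u v"
    and solh: "fear_solution \<Omega> (outward_normal \<phi>) a b c m d1 d2 (\<lambda>_. Inf (k ` \<Omega>)) u0 v0 uh vh"
    and solt: "fear_solution \<Omega> (outward_normal \<phi>) a b c m d1 d2 (\<lambda>_. Sup (k ` \<Omega>)) u0 v0 ut vt"
  shows "\<forall>x\<in>\<Omega>. \<forall>t\<ge>0. vt x t \<le> v x t \<and> v x t \<le> vh x t"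
proof -
  have ne: "\<Omega> \<noteq> {}" using dom unfolding smooth_bdd_domain_def by auto
  have bb: "bdd_below (k ` \<Omega>)" using k_nonneg by (auto intro!: bdd_belowI[of _ 0])
  have inf0: "0 \<le> Inf (k ` \<Omega>)" using ne k_nonneg by (auto intro!: cInf_greatest)
  have infle: "Inf (k ` \<Omega>) \<le> k x" if "x \<in> \<Omega>" for x using bb that by (auto intro!: cInf_lower)
  have supge: "k x \<le> Sup (k ` \<Omega>)" if "x \<in> \<Omega>" for x using k_bdd that by (auto intro!: cSup_upper)
  have c1: "\<forall>x\<in>\<Omega>. \<forall>t\<ge>0. v x t \<le> vh x t"
    by (rule comparison[OF dom pos, where Ka="\<lambda>_. Inf (k ` \<Omega>)" and Kb=k and Kmax="Inf (k ` \<Omega>)",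
          OF _ solh sol]) (use inf0 infle in auto)
  have c2: "\<forall>x\<in>\<Omega>. \<forall>t\<ge>0. vt x t \<le> v x t"
    by (rule comparison[OF dom pos, where Ka=k and Kb="\<lambda>_. Sup (k ` \<Omega>)" and Kmax="Sup (k ` \<Omega>)",
          OF _ sol solt]) (use k_nonneg supge in auto)
  show ?thesis using c1 c2 by blast
qed

end
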